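(* Let $H$ be a separable Hilbert space with inner product $\langle\cdot,\cdot\rangle$ and norm $\|\cdot\|$, and let $A$ be a positive self-adjoint operator on $H$ with compact inverse, with orthonormal eigenfunctions $(w_n)$ and eigenvalues $0<\lambda_1\le\lambda_2\le\cdots$. Let $\mathcal L$ be a Banach space satisfying: (i) for some $\gamma>0$, either $D(A^\gamma)\subset\mathcal L\subset H$ or $H\subset\mathcal L\subset D(A^{-\gamma})$, with continuous inclusions; (ii) there is a constant $C_{\mathcal L}>0$ with $\|e^{-\theta A}u\|_{\mathcal L}\le C_{\mathcal L}\|u\|_{\mathcal L}$ for all $\theta\ge0$ and $u\in\mathcal L$, and $\|e^{-\theta A}u-u\|_{\mathcal L}\to0$ as $\theta\to0^+$ for each $u\in\mathcal L$. For $\theta>0$ set $\Pi_\theta u:=\sum_{\lambda_n<\theta^{-2}}e^{-\theta\lambda_n}\langle u,w_n\rangle w_n$. Then (i) the range of $\Pi_\theta$ is the linear span of finitely many eigenfunctions of $A$, so in particular $\Pi_\theta u\in D(A^\alpha)$ for every $\alpha\in\mathbb R$; and (ii) if $X=\mathcal L$ or $X=D(A^\alpha)$ for any $\alpha\in\mathbb R$, then (a) $\Pi_\theta$ is a bounded operator on $X$, uniformly for $\theta>0$, and (b) for every $u\in X$, $\Pi_\theta u\to u$ in $X$ as $\theta\to0^+$.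
   Context: For $\alpha\ge0$, $D(A^\alpha)=\{u=\sum_j\hat u_jw_j:\ \sum_j\lambda_j^{2\alpha}|\hat u_j|^2<\infty\}$ with norm $\|u\|_{D(A^\alpha)}^2=\sum_j\lambda_j^{2\alpha}|\hat u_j|^2$; for $\alpha<0$, $D(A^\alpha)$ is the dual of $D(A^{-\alpha})$, equivalently the completion of finite sums $\sum_j\hat u_jw_j$ in the norm given by the same formula. The semigroup is $e^{-\theta A}u=\sum_j e^{-\theta\lambda_j}\hat u_j w_j$ for $\theta\ge0$, where $\hat u_j=\langle u,w_j\rangle$ (interpreted via the pairing of $D(A^\alpha)$ with $D(A^{-\alpha})$ when $\alpha<0$); the same interpretation of $\langle u,w_n\rangle$ is used in $\Pi_\theta$. *)

theory Defs
  imports "HOL-Analysis.Analysis"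
begin

text \<open>Everything is expressed through the spectral data of A: an orthonormal
basis w of H of eigenfunctions and the eigenvalues lam (indexed from 0,
i.e. lam 0 is the paper's lambda_1). Elements of D(A^alpha) (for every real
alpha, including the completions for alpha < 0) are represented by their
coefficient sequences (u_hat j) = (pairing of u with w j).\<close>

type_synonym coeffs = "nat \<Rightarrow> real"

definition coeff :: "(nat \<Rightarrow> 'h::real_inner) \<Rightarrow> 'h \<Rightarrow> coeffs" where
  "coeff w u = (\<lambda>j. inner u (w j))"

definition DomA :: "(nat \<Rightarrow> real) \<Rightarrow> real \<Rightarrow> coeffs set" where
  "DomA lam \<alpha> = {c. summable (\<lambda>j. lam j powr (2 * \<alpha>) * (c j)\<^sup>2)}"

definition normDA :: "(nat \<Rightarrow> real) \<Rightarrow> real \<Rightarrow> coeffs \<Rightarrow> real" where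
  "normDA lam \<alpha> c = sqrt (\<Sum>j. lam j powr (2 * \<alpha>) * (c j)\<^sup>2)"

definition semigrp :: "(nat \<Rightarrow> real) \<Rightarrow> real \<Rightarrow> coeffs \<Rightarrow> coeffs" where
  "semigrp lam \<theta> c = (\<lambda>j. exp (- \<theta> * lam j) * c j)"

definition Pi_theta :: "(nat \<Rightarrow> real) \<Rightarrow> real \<Rightarrow> coeffs \<Rightarrow> coeffs" where
  "Pi_theta lam \<theta> c = (\<lambda>j. if lam j < 1 / \<theta>\<^sup>2 then exp (- \<theta> * lam j) * c j else 0)"

definition banach_space_on :: "coeffs set \<Rightarrow> (coeffs \<Rightarrow> real) \<Rightarrow> bool" where
  "banach_space_on L nL \<longleftrightarrow>
     (\<lambda>j. 0) \<in> L \<and>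
     (\<forall>x\<in>L. \<forall>y\<in>L. (\<lambda>j. x j + y j) \<in> L) \<and>
     (\<forall>x\<in>L. \<forall>a::real. (\<lambda>j. a * x j) \<in> L) \<and>
     (\<forall>x\<in>L. \<forall>y\<in>L. nL (\<lambda>j. x j + y j) \<le> nL x + nL y) \<and>
     (\<forall>x\<in>L. \<forall>a::real. nL (\<lambda>j. a * x j) = \<bar>a\<bar> * nL x) \<and>
     (\<forall>x\<in>L. nL x = 0 \<longleftrightarrow> x = (\<lambda>j. 0)) \<and>
     (\<forall>X. (\<forall>n. X n \<in> L) \<longrightarrow>
          (\<forall>e>0. \<exists>N. \<forall>m\<ge>N. \<forall>n\<ge>N. nL (\<lambda>j. X m j - X n j) < e) \<longrightarrow>
          (\<exists>x\<in>L. (\<lambda>n. nL (\<lambda>j. X n j - x j)) \<longlonglongrightarrow> 0))"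

definition cont_incl :: "coeffs set \<Rightarrow> (coeffs \<Rightarrow> real) \<Rightarrow> coeffs set \<Rightarrow> (coeffs \<Rightarrow> real) \<Rightarrow> bool" where
  "cont_incl S nS T nT \<longleftrightarrow> S \<subseteq> T \<and> (\<exists>K>0. \<forall>c\<in>S. nT c \<le> K * nS c)"

end

theory Submission
  imports Defs
begin


lemma exp_pow_bound:
  fixes x :: real assumes "0 \<le> x" shows "x ^ n / fact n \<le> exp x"
proof -
  have "(\<Sum>i\<in>{n}. x ^ i /\<^sub>R fact i) \<le> (\<Sum>i. x ^ i /\<^sub>R fact i)"
    by (rule sum_le_suminf) (use assms summable_exp_generic[of x] in auto)
  then show ?thesis by (simp add: exp_def divide_inverse ac_simps)
qed

lemma powr_exp_bound:
  fixes k :: real assumes "0 \<le> k"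
  shows "\<exists>M>0. \<forall>t>0. t powr k * exp (- t) \<le> M"
proof (intro exI[of _ "1 + fact (nat \<lceil>k\<rceil>)"] conjI allI impI)
  show "(0::real) < 1 + fact (nat \<lceil>k\<rceil>)" by (simp add: add_pos_pos)
next
  fix t :: real assume t: "t > 0"
  define n where "n = nat \<lceil>k\<rceil>"
  have kn: "k \<le> real n" unfolding n_def by linarith
  have 1: "t powr k \<le> 1 + t ^ n"
  proof (cases "t \<le> 1")
    case True
    then have "t powr k \<le> 1 powr k" using t assms by (intro powr_mono2) auto
    then have "t powr k \<le> 1" by simp
    moreover have "0 \<le> t ^ n" using t by simp
    ultimately show ?thesis by linarith
  next
    case False
    then have "t powr k \<le> t powr (real n)" using kn by (intro powr_mono) auto
    also have "\<dots> = t ^ n" using t by (simp add: powr_realpow)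
    finally show ?thesis by simp
  qed
  have 2: "t ^ n * exp (- t) \<le> fact n"
    using exp_pow_bound[of t n] t by (simp add: exp_minus field_simps)
  have 3: "exp (- t) \<le> 1" using t by simp
  have "t powr k * exp (- t) \<le> (1 + t ^ n) * exp (- t)"
    using 1 by (intro mult_right_mono) auto
  also have "\<dots> = exp (- t) + t ^ n * exp (- t)" by (simp add: algebra_simps)
  also have "\<dots> \<le> 1 + fact n" using 2 3 by linarith
  finally show "t powr k * exp (- t) \<le> 1 + fact (nat \<lceil>k\<rceil>)" unfolding n_def .
qed

lemma key_bound:
  fixes \<gamma> :: real assumes "\<gamma> > 0"
  shows "\<exists>M>0. \<forall>\<theta>>0. \<forall>l>0. l \<ge> 1 / \<theta>\<^sup>2 \<longrightarrow> l powr \<gamma> * exp (- \<theta> * l) \<le> M * min \<theta> 1"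
proof -
  obtain M1 where M1: "M1 > 0" "\<And>t. t > 0 \<Longrightarrow> t powr (2*\<gamma>) * exp (- t) \<le> M1"
    using powr_exp_bound[of "2*\<gamma>"] assms by auto
  obtain M2 where M2: "M2 > 0" "\<And>t. t > 0 \<Longrightarrow> t powr (2*\<gamma>+1) * exp (- t) \<le> M2"
    using powr_exp_bound[of "2*\<gamma>+1"] assms by auto
  show ?thesis
  proof (intro exI[of _ "max M1 M2"] conjI allI impI)
    show "0 < max M1 M2" using M1 by simp
  next
    fix \<theta> l :: real assume th: "\<theta> > 0" and l: "l > 0" and ll: "l \<ge> 1 / \<theta>\<^sup>2"
    define t where "t = \<theta> * l"
    define s where "s = \<theta>\<^sup>2 * l"
    have t: "t > 0" using th l by (simp add: t_def)
    have s1: "s \<ge> 1" using ll th by (simp add: s_def field_simps)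
    have tt: "t \<ge> 1 / \<theta>" using ll th by (simp add: t_def field_simps power2_eq_square)
    have sg: "s powr \<gamma> \<ge> 1" using s1 assms by (simp add: ge_one_powr_ge_zero)
    have P0: "l powr \<gamma> * exp (- t) \<ge> 0" by simp
    have e1: "t powr (2*\<gamma>) = s powr \<gamma> * l powr \<gamma>"
    proof -
      have "t powr (2*\<gamma>) = (t powr 2) powr \<gamma>" by (simp only: powr_powr)
      also have "t powr 2 = t\<^sup>2" using t by (simp only: powr_numeral less_imp_le)
      also have "t\<^sup>2 = s * l" by (simp add: t_def s_def power2_eq_square)
      also have "(s * l) powr \<gamma> = s powr \<gamma> * l powr \<gamma>" using s1 l by (simp add: powr_mult)
      finally show ?thesis .
    qed
    have e2: "t powr (2*\<gamma>+1) = s powr \<gamma> * l powr \<gamma> * t"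
    proof -
      have "t powr (2*\<gamma>+1) = t powr (2*\<gamma>) * t powr 1" by (rule powr_add)
      also have "t powr 1 = t" using t by simp
      finally show ?thesis using e1 by simp
    qed
    have b1: "l powr \<gamma> * exp (- t) \<le> M1"
    proof -
      have "l powr \<gamma> * exp (- t) \<le> s powr \<gamma> * (l powr \<gamma> * exp (- t))"
        using mult_right_mono[OF sg P0] by simp
      also have "\<dots> = t powr (2*\<gamma>) * exp (- t)" using e1 by simp
      also have "\<dots> \<le> M1" using M1 t by auto
      finally show ?thesis .
    qed
    have b2: "l powr \<gamma> * exp (- t) \<le> M2 * \<theta>"
    proof -
      have "l powr \<gamma> * exp (- t) * t \<le> s powr \<gamma> * (l powr \<gamma> * exp (- t)) * t"
        using mult_right_mono[OF sg P0] t by (intro mult_right_mono) auto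
      also have "\<dots> = t powr (2*\<gamma>+1) * exp (- t)" using e2 by simp
      also have "\<dots> \<le> M2" using M2 t by auto
      finally have "l powr \<gamma> * exp (- t) * t \<le> M2" .
      moreover have "l powr \<gamma> * exp (- t) * (1/\<theta>) \<le> l powr \<gamma> * exp (- t) * t"
        using tt P0 by (intro mult_left_mono) auto
      ultimately have "l powr \<gamma> * exp (- t) / \<theta> \<le> M2" by simp
      then show ?thesis using th by (simp add: field_simps)
    qed
    have "l powr \<gamma> * exp (- t) \<le> max M1 M2 * min \<theta> 1"
    proof (cases "\<theta> \<le> 1")
      case True
      then show ?thesis using b2 th M1 M2
        by (smt (verit) mult_right_mono)
    next
      case False
      then show ?thesis using b1 by simp
    qed
    then show "l powr \<gamma> * exp (- \<theta> * l) \<le> max M1 M2 * min \<theta> 1" by (simp add: t_def)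
  qed
qed





lemma Pi_sq_le:
  assumes "\<theta> > 0" "lam j \<ge> 0"
  shows "(Pi_theta lam \<theta> u j)\<^sup>2 \<le> (u j)\<^sup>2"
proof -
  have "exp (- \<theta> * lam j) \<le> 1" using assms by simp
  moreover have "0 \<le> exp (- \<theta> * lam j)" by simp
  ultimately have "(exp (- \<theta> * lam j))\<^sup>2 \<le> 1" by (simp add: power_le_one)
  then have "(exp (- \<theta> * lam j))\<^sup>2 * (u j)\<^sup>2 \<le> (u j)\<^sup>2"
    by (simp add: mult_left_le_one_le)
  then show ?thesis by (simp add: Pi_theta_def power_mult_distrib)
qed

lemma DomA_part:
  assumes lpos: "\<And>j. lam j > 0"
  shows "(\<exists>C. \<forall>\<theta>>0. \<forall>u\<in>DomA lam \<alpha>. Pi_theta lam \<theta> u \<in> DomA lam \<alpha> \<and>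
                normDA lam \<alpha> (Pi_theta lam \<theta> u) \<le> C * normDA lam \<alpha> u)
       \<and> (\<forall>u\<in>DomA lam \<alpha>.
            ((\<lambda>\<theta>. normDA lam \<alpha> (\<lambda>j. Pi_theta lam \<theta> u j - u j)) \<longlongrightarrow> 0) (at_right 0))"
proof (intro conjI exI[of _ 1] allI impI ballI)
  fix \<theta> :: real and u assume th: "\<theta> > 0" and u: "u \<in> DomA lam \<alpha>"
  have su: "summable (\<lambda>j. lam j powr (2 * \<alpha>) * (u j)\<^sup>2)" using u by (simp add: DomA_def)
  have le: "\<And>j. lam j powr (2 * \<alpha>) * (Pi_theta lam \<theta> u j)\<^sup>2 \<le> lam j powr (2 * \<alpha>) * (u j)\<^sup>2"
    using Pi_sq_le[OF th, of lam] lpos by (simp add: less_imp_le mult_left_mono)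
  have sp: "summable (\<lambda>j. lam j powr (2 * \<alpha>) * (Pi_theta lam \<theta> u j)\<^sup>2)"
    by (rule summable_comparison_test[OF _ su]) (use le in auto)
  then show "Pi_theta lam \<theta> u \<in> DomA lam \<alpha>" by (simp add: DomA_def)
  show "normDA lam \<alpha> (Pi_theta lam \<theta> u) \<le> 1 * normDA lam \<alpha> u"
    unfolding normDA_def using suminf_le[OF le sp su] by simp
next
  fix u assume u: "u \<in> DomA lam \<alpha>"
  have su: "summable (\<lambda>j. lam j powr (2 * \<alpha>) * (u j)\<^sup>2)" using u by (simp add: DomA_def)
  define a where "a = (\<lambda>j \<theta>. lam j powr (2 * \<alpha>) * (Pi_theta lam \<theta> u j - u j)\<^sup>2)"
  have lim: "((\<lambda>\<theta>. a j \<theta>) \<longlongrightarrow> 0) (at_right 0)" for j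
  proof -
    have "((\<lambda>\<theta>. lam j powr (2 * \<alpha>) * (exp (- \<theta> * lam j) * u j - u j)\<^sup>2) \<longlongrightarrow>
            lam j powr (2 * \<alpha>) * (exp (- 0 * lam j) * u j - u j)\<^sup>2) (at_right 0)"
      by (intro tendsto_intros)
    then have 1: "((\<lambda>\<theta>. lam j powr (2 * \<alpha>) * (exp (- \<theta> * lam j) * u j - u j)\<^sup>2) \<longlongrightarrow> 0) (at_right 0)"
      by simp
    define d where "d = min 1 (1 / (lam j + 1))"
    have d: "d > 0" using lpos[of j] by (simp add: d_def)
    have ev: "eventually (\<lambda>\<theta>. \<theta> \<in> {0<..<d}) (at_right 0)"
      by (rule eventually_at_right_real[OF d])
    have "eventually (\<lambda>\<theta>. lam j powr (2 * \<alpha>) * (exp (- \<theta> * lam j) * u j - u j)\<^sup>2 = a j \<theta>) (at_right 0)"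
      using ev
    proof eventually_elim
      case (elim \<theta>)
      then have t0: "0 < \<theta>" "\<theta> < 1" "\<theta> < 1 / (lam j + 1)" by (auto simp: d_def)
      have "\<theta> * (lam j + 1) < 1" using t0 lpos[of j] by (simp add: field_simps)
      then have "\<theta> * lam j < 1" using t0 by (simp add: algebra_simps)
      then have "\<theta> * (\<theta> * lam j) < 1" using t0 lpos[of j]
        by (smt (verit) mult_le_cancel_right1 mult_pos_pos)
      then have "lam j < 1 / \<theta>\<^sup>2" using t0 by (simp add: field_simps power2_eq_square)
      then show ?case by (simp add: a_def Pi_theta_def)
    qed
    from Lim_transform_eventually[OF 1 this] show ?thesis .
  qed
  have bnd: "norm (a k \<theta>) \<le> lam k powr (2 * \<alpha>) * (u k)\<^sup>2" if th: "\<theta> > 0" for k and \<theta> :: real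
  proof -
    have "(Pi_theta lam \<theta> u k - u k)\<^sup>2 \<le> (u k)\<^sup>2"
    proof (cases "lam k < 1 / \<theta>\<^sup>2")
      case True
      define e where "e = exp (- \<theta> * lam k)"
      have e: "0 \<le> e" "e \<le> 1" using th lpos[of k] by (auto simp: e_def)
      have "(Pi_theta lam \<theta> u k - u k)\<^sup>2 = (1 - e)\<^sup>2 * (u k)\<^sup>2"
        using True by (simp add: Pi_theta_def e_def power2_eq_square algebra_simps)
      also have "\<dots> \<le> 1 * (u k)\<^sup>2" using e by (intro mult_right_mono) (auto simp: power_le_one)
      finally show ?thesis by simp
    qed (simp add: Pi_theta_def)
    then show ?thesis by (simp add: a_def mult_left_mono)
  qed
  have bound: "eventually (\<lambda>(k, \<theta>). norm (a k \<theta>) \<le> lam k powr (2 * \<alpha>) * (u k)\<^sup>2) (at_top \<times>\<^sub>F at_right 0)"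
    unfolding eventually_prod_filter
    using bnd eventually_at_right_less[of "0::real"] by (intro exI[of _ "\<lambda>_. True"] exI[of _ "\<lambda>\<theta>. \<theta> > 0"]) auto
  have "((\<lambda>\<theta>. suminf (\<lambda>k. a k \<theta>)) \<longlongrightarrow> suminf (\<lambda>_. 0::real)) (at_right 0)"
    using tannerys_theorem[where a=a and b="\<lambda>_. 0" and F="at_right (0::real)", OF lim bound su] by simp
  then have "((\<lambda>\<theta>. sqrt (suminf (\<lambda>k. a k \<theta>))) \<longlongrightarrow> sqrt 0) (at_right 0)"
    by (intro tendsto_real_sqrt) simp
  then show "((\<lambda>\<theta>. normDA lam \<alpha> (\<lambda>j. Pi_theta lam \<theta> u j - u j)) \<longlongrightarrow> 0) (at_right 0)"
    by (simp add: normDA_def a_def)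
qed



lemma tail_terms:
  fixes B :: real and u lam :: "nat \<Rightarrow> real" and \<theta> \<gamma> :: real and j :: nat
  assumes th: "\<theta> > 0" and l: "lam j > 0"
    and Bnd: "lam j \<ge> 1 / \<theta>\<^sup>2 \<Longrightarrow> lam j powr \<gamma> * exp (- \<theta> * lam j) \<le> B"
  defines "tj \<equiv> (if lam j < 1 / \<theta>\<^sup>2 then 0 else exp (- \<theta> * lam j) * u j)"
  shows "lam j powr (2 * \<gamma>) * tj\<^sup>2 \<le> B\<^sup>2 * (u j)\<^sup>2"
    and "tj\<^sup>2 \<le> B\<^sup>2 * (lam j powr (2 * - \<gamma>) * (u j)\<^sup>2)"
proof -
  have "lam j powr (2 * \<gamma>) * tj\<^sup>2 \<le> B\<^sup>2 * (u j)\<^sup>2 \<and>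
        tj\<^sup>2 \<le> B\<^sup>2 * (lam j powr (2 * - \<gamma>) * (u j)\<^sup>2)"
  proof (cases "lam j < 1 / \<theta>\<^sup>2")
    case True then show ?thesis by (simp add: tj_def)
  next
    case False
    define p where "p = lam j powr \<gamma>"
    define e where "e = exp (- \<theta> * lam j)"
    have p: "p > 0" using l by (simp add: p_def)
    have pe: "0 \<le> p * e" "p * e \<le> B" using Bnd False p by (auto simp: p_def e_def)
    have pe2: "(p * e)\<^sup>2 \<le> B\<^sup>2" using pe by (intro power_mono) auto
    have l2: "lam j powr (2 * \<gamma>) = p * p" using l by (simp add: p_def powr_add[symmetric])
    have l3: "lam j powr (2 * - \<gamma>) = 1 / (p * p)" using l
      by (simp add: p_def powr_add[symmetric] powr_minus divide_inverse)
    have tj: "tj = e * u j" using False by (simp add: tj_def e_def)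
    have 1: "lam j powr (2 * \<gamma>) * tj\<^sup>2 = (p * e)\<^sup>2 * (u j)\<^sup>2"
      unfolding l2 tj by (simp add: power2_eq_square algebra_simps)
    have 2: "tj\<^sup>2 = (p * e)\<^sup>2 * (1 / (p * p) * (u j)\<^sup>2)"
      using p by (simp add: tj power2_eq_square field_simps)
    have 3: "lam j powr (2 * \<gamma>) * tj\<^sup>2 \<le> B\<^sup>2 * (u j)\<^sup>2"
      unfolding 1 using pe2 by (intro mult_right_mono) auto
    have 4: "tj\<^sup>2 \<le> B\<^sup>2 * (lam j powr (2 * - \<gamma>) * (u j)\<^sup>2)"
      unfolding 2 l3 using pe2 p by (intro mult_right_mono) auto
    show ?thesis using 3 4 by blast
  qed
  then show "lam j powr (2 * \<gamma>) * tj\<^sup>2 \<le> B\<^sup>2 * (u j)\<^sup>2"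
    and "tj\<^sup>2 \<le> B\<^sup>2 * (lam j powr (2 * - \<gamma>) * (u j)\<^sup>2)" by auto
qed



lemma L_part:
  fixes lam :: "nat \<Rightarrow> real" and L :: "coeffs set" and nL :: "coeffs \<Rightarrow> real" and \<gamma> CL :: real
  assumes lpos: "\<And>j. lam j > 0"
    and L_banach: "banach_space_on L nL"
    and gamma_pos: "\<gamma> > 0"
    and L_incl: "(cont_incl (DomA lam \<gamma>) (normDA lam \<gamma>) L nL \<and>
                  cont_incl L nL (DomA lam 0) (normDA lam 0))
               \<or> (cont_incl (DomA lam 0) (normDA lam 0) L nL \<and>
                  cont_incl L nL (DomA lam (- \<gamma>)) (normDA lam (- \<gamma>)))"
    and semigrp_bdd: "\<And>\<theta> u. \<theta> \<ge> 0 \<Longrightarrow> u \<in> L \<Longrightarrow>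
                        semigrp lam \<theta> u \<in> L \<and> nL (semigrp lam \<theta> u) \<le> CL * nL u"
    and semigrp_cont: "\<And>u. u \<in> L \<Longrightarrow>
                        ((\<lambda>\<theta>. nL (\<lambda>j. semigrp lam \<theta> u j - u j)) \<longlongrightarrow> 0) (at_right 0)"
  shows "(\<exists>C. \<forall>\<theta>>0. \<forall>u\<in>L. Pi_theta lam \<theta> u \<in> L \<and> nL (Pi_theta lam \<theta> u) \<le> C * nL u)
   \<and> (\<forall>u\<in>L. ((\<lambda>\<theta>. nL (\<lambda>j. Pi_theta lam \<theta> u j - u j)) \<longlongrightarrow> 0) (at_right 0))"
proof -
  have add: "\<And>x y. x \<in> L \<Longrightarrow> y \<in> L \<Longrightarrow> (\<lambda>j. x j + y j) \<in> L"
    and smul: "\<And>x a. x \<in> L \<Longrightarrow> (\<lambda>j. a * x j) \<in> L"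
    and tri: "\<And>x y. x \<in> L \<Longrightarrow> y \<in> L \<Longrightarrow> nL (\<lambda>j. x j + y j) \<le> nL x + nL y"
    and hom: "\<And>x a. x \<in> L \<Longrightarrow> nL (\<lambda>j. a * x j) = \<bar>a\<bar> * nL x"
    and zero: "(\<lambda>j. 0) \<in> L" "\<And>x. x \<in> L \<Longrightarrow> nL x = 0 \<longleftrightarrow> x = (\<lambda>j. 0)"
    using L_banach unfolding banach_space_on_def by blast+
  have nn: "nL x \<ge> 0" if x: "x \<in> L" for x
  proof -
    have "nL (\<lambda>j. x j + (-1) * x j) \<le> nL x + nL (\<lambda>j. (-1) * x j)"
      using tri[OF x smul[OF x]] .
    moreover have "(\<lambda>j. x j + (-1) * x j) = (\<lambda>j. 0)" by auto
    moreover have "nL (\<lambda>j. 0) = 0" using zero(2)[OF zero(1)] by simp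
    ultimately show ?thesis using hom[OF x, of "-1"] by simp
  qed
  have p0: "\<And>j. lam j powr (2 * 0) = 1" using lpos by (metis mult_zero_right powr_zero_eq_one less_irrefl)
  obtain M where M: "M > 0" "\<And>\<theta> l. \<theta> > 0 \<Longrightarrow> l > 0 \<Longrightarrow> l \<ge> 1 / \<theta>\<^sup>2 \<Longrightarrow>
        l powr \<gamma> * exp (- \<theta> * l) \<le> M * min \<theta> 1"
    using key_bound[OF gamma_pos] by blast
  define B where "B = (\<lambda>\<theta>::real. M * min \<theta> 1)"
  have B0: "B \<theta> \<ge> 0" if "\<theta> > 0" for \<theta> using M that by (simp add: B_def)
  have Ble: "B \<theta> \<le> M" if "\<theta> > 0" for \<theta> using M that by (simp add: B_def)
  have Blim: "(B \<longlongrightarrow> 0) (at_right 0)"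
  proof -
    have "((\<lambda>\<theta>::real. M * min \<theta> 1) \<longlongrightarrow> M * min 0 1) (at_right 0)"
      by (intro tendsto_intros)
    then show ?thesis by (simp add: B_def)
  qed
  define tail where "tail = (\<lambda>\<theta> (u::coeffs) j. if lam j < 1 / \<theta>\<^sup>2 then 0 else exp (- \<theta> * lam j) * u j)"
  have tt: "lam j powr (2 * \<gamma>) * (tail \<theta> u j)\<^sup>2 \<le> (B \<theta>)\<^sup>2 * (u j)\<^sup>2"
           "(tail \<theta> u j)\<^sup>2 \<le> (B \<theta>)\<^sup>2 * (lam j powr (2 * - \<gamma>) * (u j)\<^sup>2)"
    if th: "\<theta> > 0" for \<theta> u j
    using tail_terms[where \<theta>=\<theta> and lam=lam and j=j and \<gamma>=\<gamma> and B="B \<theta>" and u=u, OF th lpos[of j]] M(2)[OF th lpos[of j]]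
    unfolding tail_def B_def by auto
  obtain K where K: "K > 0" "\<And>\<theta> u. \<theta> > 0 \<Longrightarrow> u \<in> L \<Longrightarrow> tail \<theta> u \<in> L \<and> nL (tail \<theta> u) \<le> K * B \<theta> * nL u"
  proof -
    consider (c1) "cont_incl (DomA lam \<gamma>) (normDA lam \<gamma>) L nL" "cont_incl L nL (DomA lam 0) (normDA lam 0)"
      | (c2) "cont_incl (DomA lam 0) (normDA lam 0) L nL" "cont_incl L nL (DomA lam (- \<gamma>)) (normDA lam (- \<gamma>))"
      using L_incl by blast
    then show ?thesis
    proof cases
      case c1
      obtain K1 where K1: "K1 > 0" "DomA lam \<gamma> \<subseteq> L" "\<And>c. c \<in> DomA lam \<gamma> \<Longrightarrow> nL c \<le> K1 * normDA lam \<gamma> c"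
        using c1(1) unfolding cont_incl_def by blast
      obtain K2 where K2: "K2 > 0" "L \<subseteq> DomA lam 0" "\<And>c. c \<in> L \<Longrightarrow> normDA lam 0 c \<le> K2 * nL c"
        using c1(2) unfolding cont_incl_def by blast
      show ?thesis
      proof (rule that[of "K1 * K2"])
        show "K1 * K2 > 0" using K1 K2 by simp
        fix \<theta> :: real and u assume th: "\<theta> > 0" and u: "u \<in> L"
        have su: "summable (\<lambda>j. (u j)\<^sup>2)" using K2(2) u p0 by (auto simp: DomA_def)
        have su2: "summable (\<lambda>j. (B \<theta>)\<^sup>2 * (u j)\<^sup>2)" using su by (rule summable_mult)
        have st: "summable (\<lambda>j. lam j powr (2 * \<gamma>) * (tail \<theta> u j)\<^sup>2)"
          by (rule summable_comparison_test[OF _ su2]) (use tt(1)[OF th] in auto)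
        then have tD: "tail \<theta> u \<in> DomA lam \<gamma>" by (simp add: DomA_def)
        have "normDA lam \<gamma> (tail \<theta> u) \<le> sqrt (\<Sum>j. (B \<theta>)\<^sup>2 * (u j)\<^sup>2)"
          unfolding normDA_def using suminf_le[OF tt(1)[OF th] st su2] by simp
        also have "\<dots> = B \<theta> * normDA lam 0 u"
        proof -
          have "(\<Sum>j. (B \<theta>)\<^sup>2 * (u j)\<^sup>2) = (B \<theta>)\<^sup>2 * (\<Sum>j. (u j)\<^sup>2)" by (rule suminf_mult[OF su])
          then show ?thesis unfolding normDA_def p0 using B0[OF th] by (simp add: real_sqrt_mult)
        qed
        also have "\<dots> \<le> B \<theta> * (K2 * nL u)" using K2(3)[OF u] B0[OF th] by (rule mult_left_mono)
        finally have "normDA lam \<gamma> (tail \<theta> u) \<le> B \<theta> * (K2 * nL u)" .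
        then have "nL (tail \<theta> u) \<le> K1 * (B \<theta> * (K2 * nL u))"
          using K1(3)[OF tD] K1(1) by (smt (verit) mult_left_mono)
        then show "tail \<theta> u \<in> L \<and> nL (tail \<theta> u) \<le> K1 * K2 * B \<theta> * nL u"
          using K1(2) tD by (auto simp: algebra_simps)
      qed
    next
      case c2
      obtain K1 where K1: "K1 > 0" "DomA lam 0 \<subseteq> L" "\<And>c. c \<in> DomA lam 0 \<Longrightarrow> nL c \<le> K1 * normDA lam 0 c"
        using c2(1) unfolding cont_incl_def by blast
      obtain K2 where K2: "K2 > 0" "L \<subseteq> DomA lam (- \<gamma>)" "\<And>c. c \<in> L \<Longrightarrow> normDA lam (- \<gamma>) c \<le> K2 * nL c"
        using c2(2) unfolding cont_incl_def by blast
      show ?thesis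
      proof (rule that[of "K1 * K2"])
        show "K1 * K2 > 0" using K1 K2 by simp
        fix \<theta> :: real and u assume th: "\<theta> > 0" and u: "u \<in> L"
        have su: "summable (\<lambda>j. lam j powr (2 * - \<gamma>) * (u j)\<^sup>2)" using K2(2) u by (auto simp: DomA_def)
        have su2: "summable (\<lambda>j. (B \<theta>)\<^sup>2 * (lam j powr (2 * - \<gamma>) * (u j)\<^sup>2))" using su by (rule summable_mult)
        have st: "summable (\<lambda>j. (tail \<theta> u j)\<^sup>2)"
          by (rule summable_comparison_test[OF _ su2]) (use tt(2)[OF th] in auto)
        then have tD: "tail \<theta> u \<in> DomA lam 0" unfolding DomA_def p0 by simp
        have "normDA lam 0 (tail \<theta> u) \<le> sqrt (\<Sum>j. (B \<theta>)\<^sup>2 * (lam j powr (2 * - \<gamma>) * (u j)\<^sup>2))"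
          unfolding normDA_def p0 using suminf_le[OF tt(2)[OF th] st su2] by simp
        also have "\<dots> = B \<theta> * normDA lam (- \<gamma>) u"
        proof -
          have "(\<Sum>j. (B \<theta>)\<^sup>2 * (lam j powr (2 * - \<gamma>) * (u j)\<^sup>2)) = (B \<theta>)\<^sup>2 * (\<Sum>j. lam j powr (2 * - \<gamma>) * (u j)\<^sup>2)" by (rule suminf_mult[OF su])
          then show ?thesis unfolding normDA_def using B0[OF th] by (simp add: real_sqrt_mult)
        qed
        also have "\<dots> \<le> B \<theta> * (K2 * nL u)" using K2(3)[OF u] B0[OF th] by (rule mult_left_mono)
        finally have "normDA lam 0 (tail \<theta> u) \<le> B \<theta> * (K2 * nL u)" .
        then have "nL (tail \<theta> u) \<le> K1 * (B \<theta> * (K2 * nL u))"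
          using K1(3)[OF tD] K1(1) by (smt (verit) mult_left_mono)
        then show "tail \<theta> u \<in> L \<and> nL (tail \<theta> u) \<le> K1 * K2 * B \<theta> * nL u"
          using K1(2) tD by (auto simp: algebra_simps)
      qed
    qed
  qed
  have decomp: "Pi_theta lam \<theta> u = (\<lambda>j. semigrp lam \<theta> u j + (-1) * tail \<theta> u j)" for \<theta> u
    by (auto simp: Pi_theta_def semigrp_def tail_def)
  have decomp2: "(\<lambda>j. Pi_theta lam \<theta> u j - u j) =
      (\<lambda>j. (\<lambda>j. semigrp lam \<theta> u j + (-1) * u j) j + (-1) * tail \<theta> u j)" for \<theta> u
    by (auto simp: Pi_theta_def semigrp_def tail_def)
  have diffeq: "(\<lambda>j. semigrp lam \<theta> u j + (-1) * u j) = (\<lambda>j. semigrp lam \<theta> u j - u j)" for \<theta> u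
    by auto
  show ?thesis
  proof (intro conjI exI[of _ "CL + K * M"] allI impI ballI)
    fix \<theta> :: real and u assume th: "\<theta> > 0" and u: "u \<in> L"
    have sL: "semigrp lam \<theta> u \<in> L" "nL (semigrp lam \<theta> u) \<le> CL * nL u"
      using semigrp_bdd[of \<theta> u] th u by auto
    have tL: "tail \<theta> u \<in> L" "nL (tail \<theta> u) \<le> K * B \<theta> * nL u" using K(2)[OF th u] by auto
    show "Pi_theta lam \<theta> u \<in> L" unfolding decomp using add[OF sL(1) smul[OF tL(1), of "-1"]] .
    have "nL (Pi_theta lam \<theta> u) \<le> nL (semigrp lam \<theta> u) + nL (tail \<theta> u)"
      unfolding decomp using tri[OF sL(1) smul[OF tL(1), of "-1"]] hom[OF tL(1), of "-1"] by simp
    also have "\<dots> \<le> CL * nL u + K * M * nL u"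
    proof -
      have "K * B \<theta> * nL u \<le> K * M * nL u"
        using Ble[OF th] K(1) nn[OF u] by (intro mult_right_mono mult_left_mono) auto
      then show ?thesis using sL(2) tL(2) by linarith
    qed
    finally show "nL (Pi_theta lam \<theta> u) \<le> (CL + K * M) * nL u" by (simp add: algebra_simps)
  next
    fix u assume u: "u \<in> L"
    have ev: "eventually (\<lambda>\<theta>. nL (\<lambda>j. Pi_theta lam \<theta> u j - u j) \<le>
               nL (\<lambda>j. semigrp lam \<theta> u j - u j) + K * B \<theta> * nL u) (at_right 0)"
      using eventually_at_right_less[of "0::real"]
    proof eventually_elim
      case (elim \<theta>)
      then have th: "\<theta> > 0" by simp
      have sL: "semigrp lam \<theta> u \<in> L" using semigrp_bdd[of \<theta> u] th u by auto
      have dL: "(\<lambda>j. semigrp lam \<theta> u j + (-1) * u j) \<in> L" using add[OF sL smul[OF u, of "-1"]] .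
      have tL: "tail \<theta> u \<in> L" "nL (tail \<theta> u) \<le> K * B \<theta> * nL u" using K(2)[OF th u] by auto
      have "nL (\<lambda>j. Pi_theta lam \<theta> u j - u j) \<le> nL (\<lambda>j. semigrp lam \<theta> u j + (-1) * u j) + nL (tail \<theta> u)"
        unfolding decomp2 using tri[OF dL smul[OF tL(1), of "-1"]] hom[OF tL(1), of "-1"] by simp
      then show ?case using tL(2) unfolding diffeq by linarith
    qed
    have ev0: "eventually (\<lambda>\<theta>. 0 \<le> nL (\<lambda>j. Pi_theta lam \<theta> u j - u j)) (at_right 0)"
      using eventually_at_right_less[of "0::real"]
    proof eventually_elim
      case (elim \<theta>)
      then have th: "\<theta> > 0" by simp
      have sL: "semigrp lam \<theta> u \<in> L" using semigrp_bdd[of \<theta> u] th u by auto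
      have dL: "(\<lambda>j. semigrp lam \<theta> u j + (-1) * u j) \<in> L" using add[OF sL smul[OF u, of "-1"]] .
      have tL: "tail \<theta> u \<in> L" using K(2)[OF th u] by auto
      show ?case unfolding decomp2 by (rule nn[OF add[OF dL smul[OF tL, of "-1"]]])
    qed
    have lim: "((\<lambda>\<theta>. nL (\<lambda>j. semigrp lam \<theta> u j - u j) + K * B \<theta> * nL u) \<longlongrightarrow> 0 + K * 0 * nL u) (at_right 0)"
      by (intro tendsto_intros semigrp_cont[OF u] Blim)
    show "((\<lambda>\<theta>. nL (\<lambda>j. Pi_theta lam \<theta> u j - u j)) \<longlongrightarrow> 0) (at_right 0)"
      by (rule tendsto_sandwich[OF ev0 ev tendsto_const]) (use lim in simp)
  qed
qed



theorem proposition2p2: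
  fixes w :: "nat \<Rightarrow> 'h::{real_inner, complete_space}"
    and lam :: "nat \<Rightarrow> real"
    and L :: "coeffs set" and nL :: "coeffs \<Rightarrow> real"
    and \<gamma> :: real
  assumes orthonormal: "\<And>i j. inner (w i) (w j) = (if i = j then 1 else 0)"
    and basis: "closure (span (range w)) = UNIV"
    and lam_pos: "lam 0 > 0"
    and lam_mono: "mono lam"
    and lam_infty: "filterlim lam at_top sequentially"
    and L_banach: "banach_space_on L nL"
    and gamma_pos: "\<gamma> > 0"
    and L_incl: "(cont_incl (DomA lam \<gamma>) (normDA lam \<gamma>) L nL \<and>
                  cont_incl L nL (DomA lam 0) (normDA lam 0))
               \<or> (cont_incl (DomA lam 0) (normDA lam 0) L nL \<and>
                  cont_incl L nL (DomA lam (- \<gamma>)) (normDA lam (- \<gamma>)))"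
    and CL_pos: "CL > 0"
    and semigrp_bdd: "\<And>\<theta> u. \<theta> \<ge> 0 \<Longrightarrow> u \<in> L \<Longrightarrow>
                        semigrp lam \<theta> u \<in> L \<and> nL (semigrp lam \<theta> u) \<le> CL * nL u"
    and semigrp_cont: "\<And>u. u \<in> L \<Longrightarrow>
                        ((\<lambda>\<theta>. nL (\<lambda>j. semigrp lam \<theta> u j - u j)) \<longlongrightarrow> 0) (at_right 0)"
  shows
    \<comment> \<open>(i) range of Pi_theta is in the span of finitely many eigenfunctions\<close>
    "(\<forall>\<theta>>0. \<exists>F. finite F \<and>
        (\<forall>u \<in> L \<union> (\<Union>\<alpha>. DomA lam \<alpha>).
            Pi_theta lam \<theta> u = coeff w (\<Sum>j\<in>F. Pi_theta lam \<theta> u j *\<^sub>R w j) \<and>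
            (\<forall>\<alpha>. Pi_theta lam \<theta> u \<in> DomA lam \<alpha>)))
   \<and>
    \<comment> \<open>(ii) for X = L: uniform boundedness and convergence\<close>
    (\<exists>C. \<forall>\<theta>>0. \<forall>u\<in>L. Pi_theta lam \<theta> u \<in> L \<and> nL (Pi_theta lam \<theta> u) \<le> C * nL u)
   \<and> (\<forall>u\<in>L. ((\<lambda>\<theta>. nL (\<lambda>j. Pi_theta lam \<theta> u j - u j)) \<longlongrightarrow> 0) (at_right 0))
   \<and>
    \<comment> \<open>(ii) for X = D(A^alpha), every real alpha\<close>
    (\<forall>\<alpha>. (\<exists>C. \<forall>\<theta>>0. \<forall>u\<in>DomA lam \<alpha>. Pi_theta lam \<theta> u \<in> DomA lam \<alpha> \<and>
                normDA lam \<alpha> (Pi_theta lam \<theta> u) \<le> C * normDA lam \<alpha> u)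
       \<and> (\<forall>u\<in>DomA lam \<alpha>.
            ((\<lambda>\<theta>. normDA lam \<alpha> (\<lambda>j. Pi_theta lam \<theta> u j - u j)) \<longlongrightarrow> 0) (at_right 0)))"
proof -
  have lpos: "lam j > 0" for j
    using lam_pos monoD[OF lam_mono, of 0 j] by simp
  have part1: "\<forall>\<theta>>0. \<exists>F. finite F \<and>
        (\<forall>u \<in> L \<union> (\<Union>\<alpha>. DomA lam \<alpha>).
            Pi_theta lam \<theta> u = coeff w (\<Sum>j\<in>F. Pi_theta lam \<theta> u j *\<^sub>R w j) \<and>
            (\<forall>\<alpha>. Pi_theta lam \<theta> u \<in> DomA lam \<alpha>))"
  proof (intro allI impI)
    fix \<theta> :: real assume th: "\<theta> > 0"
    have "eventually (\<lambda>j. 1 / \<theta>\<^sup>2 \<le> lam j) sequentially"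
      using lam_infty unfolding filterlim_at_top by blast
    then obtain N where N: "\<And>j. j \<ge> N \<Longrightarrow> 1 / \<theta>\<^sup>2 \<le> lam j"
      unfolding eventually_sequentially by blast
    define F where "F = {j. lam j < 1 / \<theta>\<^sup>2}"
    have "F \<subseteq> {..<N}"
    proof
      fix j assume "j \<in> F"
      then have "lam j < 1 / \<theta>\<^sup>2" by (simp add: F_def)
      then show "j \<in> {..<N}" using N[of j] by (metis lessThan_iff not_le not_less)
    qed
    then have fin: "finite F" using finite_subset by blast
    have z: "Pi_theta lam \<theta> u j = 0" if "j \<notin> F" for u j
      using that by (simp add: F_def Pi_theta_def)
    show "\<exists>F. finite F \<and>
        (\<forall>u \<in> L \<union> (\<Union>\<alpha>. DomA lam \<alpha>).
            Pi_theta lam \<theta> u = coeff w (\<Sum>j\<in>F. Pi_theta lam \<theta> u j *\<^sub>R w j) \<and>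
            (\<forall>\<alpha>. Pi_theta lam \<theta> u \<in> DomA lam \<alpha>))"
    proof (intro exI[of _ F] conjI fin ballI allI)
      fix u and \<alpha> :: real
      show "Pi_theta lam \<theta> u \<in> DomA lam \<alpha>"
        unfolding DomA_def using z by (auto intro!: summable_finite[OF fin])
      show "Pi_theta lam \<theta> u = coeff w (\<Sum>j\<in>F. Pi_theta lam \<theta> u j *\<^sub>R w j)"
      proof
        fix j
        have "coeff w (\<Sum>i\<in>F. Pi_theta lam \<theta> u i *\<^sub>R w i) j =
              (\<Sum>i\<in>F. Pi_theta lam \<theta> u i * (if i = j then 1 else 0))"
          by (simp add: coeff_def inner_sum_left orthonormal)
        also have "\<dots> = (if j \<in> F then Pi_theta lam \<theta> u j else 0)"
          using fin by (simp add: if_distrib[of "\<lambda>x. _ * x"] sum.delta' cong: if_cong)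
        also have "\<dots> = Pi_theta lam \<theta> u j" using z by auto
        finally show "Pi_theta lam \<theta> u j = coeff w (\<Sum>i\<in>F. Pi_theta lam \<theta> u i *\<^sub>R w i) j" by simp
      qed
    qed
  qed
  show ?thesis
    using part1 L_part[where lam=lam and L=L and nL=nL and \<gamma>=\<gamma> and CL=CL, OF lpos L_banach gamma_pos L_incl semigrp_bdd semigrp_cont]
      DomA_part[where lam=lam, OF lpos] by blast
qed

end
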